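(* (1) Every generic length vector of length $n$ is equivalent to a generic length vector $(\ell_1,\ldots,\ell_n)$ whose entries are positive integers with $\ell_1\le\cdots\le\ell_n$ and $$\ell_n+\ell_{n-1}\le\ell_1+\cdots+\ell_{n-2}+1.$$ (2) If $\ell=(\ell_1,\ldots,\ell_n)$ is such a vector (generic, positive integer entries, nondecreasing, satisfying the displayed inequality), let $|\ell|=\ell_1+\cdots+\ell_n$ and define the length-$(n+1)$ vector $$\ell'=\Big(\ell_1,\ldots,\ell_{n-1},\tfrac{|\ell|+1}{2}-\ell_n,\tfrac{|\ell|+1}{2}\Big).$$ Then $\ell$ and $\ell'$ have the same gees.
   Context: A length vector is $\ell=(\ell_1,\ldots,\ell_n)$ of positive reals with $\ell_1\le\cdots\le\ell_n$ and $\ell_n<\ell_1+\cdots+\ell_{n-1}$; it is generic if no $S\subset\{1,\ldots,n\}$ has $\sum_{i\in S}\ell_i=\sum_{i\notin S}\ell_i$. $S$ is short if $\sum_{i\in S}\ell_i<\sum_{i\notin S}\ell_i$. Partially order subsets by $\{s_1,\ldots,s_p\}\le T$ if $T$ contains distinct elements $t_1,\ldots,t_p$ with $s_i\le t_i$. The genetic code of $\ell$ is the set of maximal elements (genes) among short subsets containing $n$; the gees are the genes with $n$ removed. Two length vectors are equivalent if they have the same genetic code (equivalently, homeomorphic polygon spaces $\overline{M}(\ell)=\{(z_i)\in(S^1)^n:\sum\ell_iz_i=0\}/O(2)$). *)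

theory Defs
  imports Complex_Main
begin

text \<open>A vector of length n is a function l :: nat => real, of which only the
entries l 1, ..., l n (indices in {1..n}) are relevant.\<close>

definition length_vector :: "nat \<Rightarrow> (nat \<Rightarrow> real) \<Rightarrow> bool" where
  "length_vector n l \<longleftrightarrow>
     (\<forall>i\<in>{1..n}. 0 < l i) \<and>
     (\<forall>i j. 1 \<le> i \<longrightarrow> i \<le> j \<longrightarrow> j \<le> n \<longrightarrow> l i \<le> l j) \<and>
     l n < (\<Sum>i=1..n-1. l i)"

definition generic :: "nat \<Rightarrow> (nat \<Rightarrow> real) \<Rightarrow> bool" where
  "generic n l \<longleftrightarrow>
     (\<forall>S. S \<subseteq> {1..n} \<longrightarrow> (\<Sum>i\<in>S. l i) \<noteq> (\<Sum>i\<in>{1..n} - S. l i))"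

definition short :: "nat \<Rightarrow> (nat \<Rightarrow> real) \<Rightarrow> nat set \<Rightarrow> bool" where
  "short n l S \<longleftrightarrow> S \<subseteq> {1..n} \<and> (\<Sum>i\<in>S. l i) < (\<Sum>i\<in>{1..n} - S. l i)"

text \<open>{s_1,...,s_p} <= T iff T contains distinct t_1,...,t_p with s_i <= t_i,
i.e. there is an injection f from S into T with s <= f s.\<close>
definition subset_le :: "nat set \<Rightarrow> nat set \<Rightarrow> bool" where
  "subset_le S T \<longleftrightarrow> (\<exists>f. inj_on f S \<and> f ` S \<subseteq> T \<and> (\<forall>s\<in>S. s \<le> f s))"

definition genes :: "nat \<Rightarrow> (nat \<Rightarrow> real) \<Rightarrow> nat set set" where
  "genes n l = {S. short n l S \<and> n \<in> S \<and>
       (\<forall>T. short n l T \<and> n \<in> T \<and> subset_le S T \<longrightarrow> T = S)}"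

definition gees :: "nat \<Rightarrow> (nat \<Rightarrow> real) \<Rightarrow> nat set set" where
  "gees n l = (\<lambda>S. S - {n}) ` genes n l"

definition equivalent_lv :: "nat \<Rightarrow> (nat \<Rightarrow> real) \<Rightarrow> (nat \<Rightarrow> real) \<Rightarrow> bool" where
  "equivalent_lv n l l' \<longleftrightarrow> genes n l = genes n l'"

definition normal_form :: "nat \<Rightarrow> (nat \<Rightarrow> real) \<Rightarrow> bool" where
  "normal_form n l \<longleftrightarrow> length_vector n l \<and> generic n l \<and>
     (\<forall>i\<in>{1..n}. l i \<in> \<int>) \<and>
     l n + l (n-1) \<le> (\<Sum>i=1..n-2. l i) + 1"

definition extend_lv :: "nat \<Rightarrow> (nat \<Rightarrow> real) \<Rightarrow> (nat \<Rightarrow> real)" where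
  "extend_lv n l = (let m = ((\<Sum>i=1..n. l i) + 1) / 2 in
     (\<lambda>i. if i < n then l i else if i = n then m - l n else m))"

end

theory Submission
  imports Defs
begin


lemma short_iff:
  "short n l S \<longleftrightarrow> S \<subseteq> {1..n} \<and> 2 * sum l S < sum l {1..n}"
proof -
  have "S \<subseteq> {1..n} \<Longrightarrow> sum l ({1..n} - S) = sum l {1..n} - sum l S"
    by (simp add: sum_diff)
  then show ?thesis unfolding short_def by auto
qed

lemma genes_cong:
  assumes "\<And>S. n \<in> S \<Longrightarrow> short n l S = short n l' S"
  shows "genes n l = genes n l'"
  using assms unfolding genes_def by blast

lemma subset_le_insert:
  assumes "A \<subseteq> {..<m}" "B \<subseteq> {..<m}"
  shows "subset_le (insert m A) (insert m B) \<longleftrightarrow> subset_le A B"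
proof
  assume "subset_le (insert m A) (insert m B)"
  then obtain f where f: "inj_on f (insert m A)" "f ` insert m A \<subseteq> insert m B"
    "\<forall>s\<in>insert m A. s \<le> f s" unfolding subset_le_def by blast
  have fm: "f m = m" using f(2,3) assms(2) by force
  have "f ` A \<subseteq> B"
  proof
    fix y assume "y \<in> f ` A"
    then obtain a where a: "a \<in> A" "y = f a" by blast
    have "a \<noteq> m" using a assms(1) by auto
    then have "f a \<noteq> f m" using f(1) a by (meson inj_on_def insertCI)
    then show "y \<in> B" using f(2) a fm by auto
  qed
  then show "subset_le A B" unfolding subset_le_def using f
    by (meson inj_on_insert insertCI)
next
  assume "subset_le A B"
  then obtain f where f: "inj_on f A" "f ` A \<subseteq> B" "\<forall>s\<in>A. s \<le> f s"
    unfolding subset_le_def by blast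
  define g where "g = f(m := m)"
  have "m \<notin> A" "m \<notin> B" using assms by auto
  have "inj_on g (insert m A)"
    using f(1,2) \<open>m \<notin> A\<close> \<open>m \<notin> B\<close> unfolding g_def inj_on_def by auto
  moreover have "g ` insert m A \<subseteq> insert m B" using f(2) \<open>m \<notin> A\<close> unfolding g_def by auto
  moreover have "\<forall>s\<in>insert m A. s \<le> g s" using f(3) \<open>m \<notin> A\<close> unfolding g_def by auto
  ultimately show "subset_le (insert m A) (insert m B)" unfolding subset_le_def by blast
qed

lemma gees_char:
  assumes hyp: "\<And>S. N \<in> S \<Longrightarrow> short N w S \<longleftrightarrow> S - {N} \<in> Q"
    and QN: "\<And>A. A \<in> Q \<Longrightarrow> A \<subseteq> {..<N}"
  shows "gees N w = {A\<in>Q. \<forall>B\<in>Q. subset_le A B \<longrightarrow> B = A}"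
proof -
  have ins: "A \<in> Q \<Longrightarrow> short N w (insert N A)" for A
    using hyp[of "insert N A"] QN[of A] by (metis insertI1 insert_Diff1 Diff_insert_absorb lessThan_iff order_less_irrefl subsetD)
  have ndA: "A \<in> Q \<Longrightarrow> N \<notin> A" for A using QN by blast
  show ?thesis
  proof (rule set_eqI, rule iffI)
    fix A assume "A \<in> gees N w"
    then obtain S where S: "S \<in> genes N w" "A = S - {N}" unfolding gees_def by blast
    have SN: "N \<in> S" "short N w S" and mx: "\<And>T. short N w T \<and> N \<in> T \<and> subset_le S T \<Longrightarrow> T = S"
      using S(1) unfolding genes_def by auto
    have AQ: "A \<in> Q" using hyp SN S(2) by blast
    have SA: "S = insert N A" using S(2) SN by auto
    have "\<forall>B\<in>Q. subset_le A B \<longrightarrow> B = A"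
    proof (intro ballI impI)
      fix B assume B: "B \<in> Q" "subset_le A B"
      have "subset_le S (insert N B)" using subset_le_insert[of A N B] QN AQ B SA by auto
      then have "insert N B = S" using mx ins[OF B(1)] by blast
      then show "B = A" using SA ndA AQ B(1)
        by (metis Diff_insert_absorb)
    qed
    then show "A \<in> {A\<in>Q. \<forall>B\<in>Q. subset_le A B \<longrightarrow> B = A}" using AQ by blast
  next
    fix A assume A: "A \<in> {A\<in>Q. \<forall>B\<in>Q. subset_le A B \<longrightarrow> B = A}"
    have AQ: "A \<in> Q" using A by blast
    have "insert N A \<in> genes N w"
      unfolding genes_def
    proof (intro CollectI conjI allI impI)
      show "short N w (insert N A)" using ins AQ .
      show "N \<in> insert N A" by simp
      fix T assume T: "short N w T \<and> N \<in> T \<and> subset_le (insert N A) T"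
      have TQ: "T - {N} \<in> Q" using hyp T by blast
      have TT: "T = insert N (T - {N})" using T by auto
      have "subset_le A (T - {N})" using subset_le_insert[of A N "T - {N}"] QN AQ TQ T TT by metis
      then have "T - {N} = A" using A TQ by blast
      then show "T = insert N A" using TT by simp
    qed
    moreover have "A = insert N A - {N}" using ndA AQ by simp
    ultimately show "A \<in> gees N w" unfolding gees_def by blast
  qed
qed



lemma nf_n3: assumes "length_vector n l" "generic n l" shows "n \<ge> 3"
proof (rule ccontr)
  assume "\<not> n \<ge> 3"
  then have "n = 0 \<or> n = 1 \<or> n = 2" by auto
  then show False
  proof (elim disjE)
    assume "n = 0" then show False using assms(2) unfolding generic_def by (simp)
  next
    assume "n = 1" then show False using assms(1) unfolding length_vector_def by auto
  next
    assume n2: "n = 2"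
    then have "l 2 < l 1" "l 1 \<le> l 2" using assms(1) unfolding length_vector_def by auto
    then show False by simp
  qed
qed

lemma part2:
  assumes nf: "normal_form n l"
  shows "gees n l = gees (n+1) (extend_lv n l)"
proof -
  have lv: "length_vector n l" and gen: "generic n l" using nf unfolding normal_form_def by auto
  have n3: "n \<ge> 3" using nf_n3[OF lv gen] .
  have pos: "\<And>i. i \<in> {1..n} \<Longrightarrow> 0 < l i" using lv unfolding length_vector_def by auto
  define T where "T = sum l {1..n}"
  define m where "m = (T + 1) / 2"
  define l' where "l' = extend_lv n l"
  have l'_def2: "l' = (\<lambda>i. if i < n then l i else if i = n then m - l n else m)"
    unfolding l'_def extend_lv_def m_def T_def Let_def by simp
  define Q where "Q = {A. A \<subseteq> {1..n-1} \<and> 2 * sum l A + 2 * l n < T}"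
  have QN: "\<And>A. A \<in> Q \<Longrightarrow> A \<subseteq> {..<n}" "\<And>A. A \<in> Q \<Longrightarrow> A \<subseteq> {..<n+1}"
  proof -
    fix A assume "A \<in> Q" then have "A \<subseteq> {1..n-1}" unfolding Q_def by simp
    then show "A \<subseteq> {..<n}" using n3 by fastforce
  next
    fix A assume "A \<in> Q" then have "A \<subseteq> {1..n-1}" unfolding Q_def by simp
    then show "A \<subseteq> {..<n+1}" using n3 by fastforce
  qed
  have sumlow: "A \<subseteq> {1..n-1} \<Longrightarrow> sum l' A = sum l A" for A
  proof (rule sum.cong)
    fix x assume "A \<subseteq> {1..n-1}" "x \<in> A"
    then have "x < n" using n3 by fastforce
    then show "l' x = l x" unfolding l'_def2 by simp
  qed simp
  have h1: "short n l S \<longleftrightarrow> S - {n} \<in> Q" if "n \<in> S" for S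
  proof -
    have eq: "S \<subseteq> {1..n} \<longleftrightarrow> S - {n} \<subseteq> {1..n-1}"
    proof
      assume "S \<subseteq> {1..n}" then show "S - {n} \<subseteq> {1..n-1}" by fastforce
    next
      assume a: "S - {n} \<subseteq> {1..n-1}"
      show "S \<subseteq> {1..n}"
      proof
        fix x assume "x \<in> S" then show "x \<in> {1..n}" using a n3 by (cases "x = n") fastforce+
      qed
    qed
    show ?thesis
    proof (cases "S \<subseteq> {1..n}")
      case True
      then have "finite S" using finite_subset by blast
      have "sum l S = l n + sum l (S - {n})" by (rule sum.remove[OF \<open>finite S\<close> that])
      then show ?thesis using True eq unfolding short_iff Q_def T_def by auto
    next
      case False
      then show ?thesis using eq unfolding short_iff Q_def by auto
    qed
  qed
  define k where "k = n - 2"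
  have nk: "n = Suc (Suc k)" "k \<ge> 1" using n3 unfolding k_def by auto
  have T': "sum l' {1..n+1} = 2 * T - 2 * l n + 1"
  proof -
    have "sum l' {1..n+1} = sum l' {1..n-1} + l' n + l' (n+1)"
      unfolding nk by (simp add: sum.cl_ivl_Suc)
    also have "\<dots> = sum l {1..n-1} + (m - l n) + m" using sumlow[of "{1..n-1}"] unfolding l'_def2 by simp
    also have "sum l {1..n-1} = T - l n" unfolding T_def nk by (simp add: sum.cl_ivl_Suc)
    finally show ?thesis unfolding m_def by simp
  qed
  have h2: "short (n+1) l' S \<longleftrightarrow> S - {n+1} \<in> Q" if "n+1 \<in> S" for S
  proof (cases "n \<in> S")
    case True
    define A0 where "A0 = S - {n, n+1}"
    have "\<not> short (n+1) l' S"
    proof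
      assume sh: "short (n+1) l' S"
      then have sub: "S \<subseteq> {1..n+1}" unfolding short_def by simp
      have A0s: "A0 \<subseteq> {1..n-1}" using sub unfolding A0_def by auto
      have Seq: "S = insert n (insert (n+1) A0)" unfolding A0_def using True that by auto
      have fin: "finite A0" using A0s finite_subset by blast
      have "n \<notin> A0" "n+1 \<notin> A0" unfolding A0_def by auto
      then have "sum l' S = sum l' A0 + l' n + l' (n+1)" unfolding Seq using fin by simp
      also have "\<dots> = sum l A0 + (m - l n) + m" using sumlow[OF A0s] unfolding l'_def2 by simp
      finally have e: "sum l' S = sum l A0 + (m - l n) + m" .
      have "sum l A0 \<ge> 0"
      proof (rule sum_nonneg)
        fix x assume "x \<in> A0" then have "x \<in> {1..n}" using A0s by fastforce
        then show "0 \<le> l x" using pos by force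
      qed
      then show False using sh e T' unfolding short_iff m_def by simp
    qed
    moreover have "S - {n+1} \<notin> Q" using True unfolding Q_def using n3 by auto
    ultimately show ?thesis by blast
  next
    case False
    define A where "A = S - {n+1}"
    have S: "S = insert (n+1) A" "n+1 \<notin> A" using that unfolding A_def by auto
    have nA: "n \<notin> A" using False unfolding A_def by auto
    have sub: "S \<subseteq> {1..n+1} \<longleftrightarrow> A \<subseteq> {1..n-1}"
    proof
      assume a: "S \<subseteq> {1..n+1}"
      show "A \<subseteq> {1..n-1}"
      proof
        fix x assume x: "x \<in> A"
        then have "x \<in> {1..n+1}" "x \<noteq> n" "x \<noteq> n+1" using a S nA by auto
        then show "x \<in> {1..n-1}" by auto
      qed
    next
      assume a: "A \<subseteq> {1..n-1}"
      show "S \<subseteq> {1..n+1}"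
      proof
        fix x assume "x \<in> S" then show "x \<in> {1..n+1}" using a S by (cases "x = n+1") fastforce+
      qed
    qed
    show ?thesis
    proof (cases "A \<subseteq> {1..n-1}")
      case True
      have fin: "finite A" using True finite_subset by blast
      have "sum l' S = sum l A + m" using sumlow[OF True] S fin unfolding l'_def2 by simp
      then show ?thesis using sub T' True unfolding short_iff Q_def A_def[symmetric] m_def
        by (auto simp: field_simps)
    next
      case False
      then show ?thesis using sub unfolding short_iff Q_def A_def[symmetric] by auto
    qed
  qed
  have "gees n l = {A\<in>Q. \<forall>B\<in>Q. subset_le A B \<longrightarrow> B = A}"
    by (rule gees_char[OF h1 QN(1)])
  moreover have "gees (n+1) l' = {A\<in>Q. \<forall>B\<in>Q. subset_le A B \<longrightarrow> B = A}"
    by (rule gees_char[OF h2 QN(2)])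
  ultimately show ?thesis unfolding l'_def by simp
qed



lemma last_short:
  assumes "n \<ge> 1"
  shows "short n f {n} \<longleftrightarrow> f n < sum f {1..n-1}"
proof -
  have "{1..n} - {n} = {1..n-1}" using assms by auto
  then show ?thesis unfolding short_def using assms by auto
qed

lemma scale:
  assumes lv: "length_vector n l" and gen: "generic n l"
  shows "\<exists>L. length_vector n L \<and> generic n L \<and> (\<forall>i\<in>{1..n}. L i \<in> \<int>) \<and>
             (\<forall>S. short n L S = short n l S)"
proof -
  have n3: "n \<ge> 3" using nf_n3[OF lv gen] .
  have pos: "\<And>i. i \<in> {1..n} \<Longrightarrow> 0 < l i" and mono: "\<And>i j. 1 \<le> i \<Longrightarrow> i \<le> j \<Longrightarrow> j \<le> n \<Longrightarrow> l i \<le> l j"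
    using lv unfolding length_vector_def by auto
  define g where "g = (\<lambda>(f::nat\<Rightarrow>real) S. sum f S - sum f ({1..n} - S))"
  have shg: "short n f S \<longleftrightarrow> S \<subseteq> {1..n} \<and> g f S < 0" for f S
    unfolding short_def g_def by auto
  have gnz: "S \<subseteq> {1..n} \<Longrightarrow> g l S \<noteq> 0" for S using gen unfolding generic_def g_def by auto
  define F where "F = (\<lambda>S. \<bar>g l S\<bar>) ` Pow {1..n}"
  define \<delta> where "\<delta> = Min F"
  have finF: "finite F" "F \<noteq> {}" unfolding F_def by auto
  have dpos: "\<delta> > 0" unfolding \<delta>_def using finF
    by (subst Min_gr_iff) (auto simp: F_def gnz)
  have dle: "S \<subseteq> {1..n} \<Longrightarrow> \<delta> \<le> \<bar>g l S\<bar>" for S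
    unfolding \<delta>_def using finF by (intro Min_le) (auto simp: F_def)
  have l1: "l 1 > 0" using pos n3 by auto
  obtain N :: nat where N: "real n / \<delta> + 1 / l 1 < real N" using reals_Archimedean2 by blast
  have Nd: "real N * \<delta> > real n"
  proof -
    have "real n / \<delta> < real N" using N l1 by (smt (verit) divide_pos_pos)
    then show ?thesis using dpos by (simp add: pos_divide_less_eq mult.commute)
  qed
  have Nl: "real N * l 1 > 1"
  proof -
    have "1 / l 1 < real N" using N dpos by (smt (verit) divide_nonneg_nonneg of_nat_0_le_iff)
    then show ?thesis using l1 by (simp add: pos_divide_less_eq mult.commute)
  qed
  define L where "L = (\<lambda>i. real_of_int \<lfloor>real N * l i\<rfloor>)"
  define e where "e = (\<lambda>i. real N * l i - L i)"
  have e01: "0 \<le> e i" "e i < 1" for i unfolding e_def L_def by linarith+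
  define E where "E = sum e {1..n}"
  have En: "E < real n"
  proof -
    have "E < sum (\<lambda>_. 1) {1..n}" unfolding E_def
      using n3 e01 by (intro sum_strict_mono) auto
    then show ?thesis by simp
  qed
  have gL: "g L S = real N * g l S - (sum e S - sum e ({1..n} - S))" for S
    unfolding g_def e_def by (simp add: sum_subtractf sum_distrib_left algebra_simps)
  have ebound: "\<bar>sum e S - sum e ({1..n} - S)\<bar> \<le> E" if "S \<subseteq> {1..n}" for S
  proof -
    have a: "0 \<le> sum e S" "0 \<le> sum e ({1..n} - S)" using e01 by (auto intro: sum_nonneg)
    have b: "sum e S \<le> E" "sum e ({1..n} - S) \<le> E" unfolding E_def using that e01
      by (auto intro!: sum_mono2)
    show ?thesis using a b by linarith
  qed
  have sign: "(g L S < 0 \<longleftrightarrow> g l S < 0) \<and> g L S \<noteq> 0" if "S \<subseteq> {1..n}" for S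
  proof -
    have "real N * \<delta> \<le> real N * \<bar>g l S\<bar>" using dle[OF that] by (simp add: mult_left_mono)
    then have "real N * \<bar>g l S\<bar> > E" using Nd En by linarith
    then have "\<bar>real N * g l S\<bar> > E" by (simp add: abs_mult)
    moreover have "real N > 0" using Nd by (cases N) auto
    then have "(real N * g l S < 0) \<longleftrightarrow> g l S < 0" by (simp add: mult_less_0_iff)
    ultimately have A: "E < \<bar>real N * g l S\<bar>" "(real N * g l S < 0) \<longleftrightarrow> g l S < 0" by blast+
    define x where "x = real N * g l S"
    define d where "d = sum e S - sum e ({1..n} - S)"
    have B: "g L S = x - d" "\<bar>d\<bar> \<le> E" using gL[of S] ebound[OF that] unfolding x_def d_def by auto
    have C: "E < \<bar>x\<bar>" "x < 0 \<longleftrightarrow> g l S < 0" using A unfolding x_def by auto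
    show ?thesis
    proof (cases "x < 0")
      case True
      then have "E < - x" "- E \<le> d" "d \<le> E" using C B by auto
      then show ?thesis using True B C by auto
    next
      case False
      then have "E < x" "- E \<le> d" "d \<le> E" using C B by auto
      then show ?thesis using False B C by auto
    qed
  qed
  have shL: "short n L S = short n l S" for S
  proof (cases "S \<subseteq> {1..n}")
    case True then show ?thesis using sign[OF True] shg[of L S] shg[of l S] by simp
  next
    case False then show ?thesis using shg[of L S] shg[of l S] by simp
  qed
  have Lpos: "L i \<ge> 1" if "i \<in> {1..n}" for i
  proof -
    have "l 1 \<le> l i" using mono[of 1 i] that by auto
    then have "real N * l 1 \<le> real N * l i" by (simp add: mult_left_mono)
    then have "real N * l i \<ge> 1" using Nl by linarith
    then show ?thesis unfolding L_def by simp
  qed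
  have Lmono: "L i \<le> L j" if "1 \<le> i" "i \<le> j" "j \<le> n" for i j
    unfolding L_def using mono[OF that] by (simp add: floor_mono mult_left_mono)
  have "l n < sum l {1..n-1}" using lv unfolding length_vector_def by auto
  then have "L n < sum L {1..n-1}" using last_short[of n l] last_short[of n L] shL n3 by auto
  then have "length_vector n L" unfolding length_vector_def using Lpos Lmono by force
  moreover have "generic n L" unfolding generic_def using sign unfolding g_def by auto
  moreover have "\<forall>i\<in>{1..n}. L i \<in> \<int>" unfolding L_def by simp
  ultimately show ?thesis using shL by blast
qed



lemma int_lt_half: "x \<in> \<int> \<Longrightarrow> y \<in> \<int> \<Longrightarrow> (2*x < 2*y+1 \<longleftrightarrow> x \<le> (y::real))"
  by (auto elim!: Ints_cases)

lemma int_neq_odd: "x \<in> \<int> \<Longrightarrow> y \<in> \<int> \<Longrightarrow> 2*x \<noteq> 2*y+(1::real)"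
proof (auto elim!: Ints_cases)
  fix a b :: int assume "2 * real_of_int a = 2 * real_of_int b + 1"
  then have "2 * a = 2 * b + 1" by linarith
  then show False by presburger
qed

lemma int_lt_succ: "x \<in> \<int> \<Longrightarrow> y \<in> \<int> \<Longrightarrow> x < y \<Longrightarrow> x + 1 \<le> (y::real)"
  by (auto elim!: Ints_cases)

lemma construct:
  assumes lv: "length_vector n L" and gen: "generic n L" and int: "\<forall>i\<in>{1..n}. L i \<in> \<int>"
    and long: "\<not> (L n + L (n-1) \<le> sum L {1..n-2} + 1)"
  shows "\<exists>l'. normal_form n l' \<and> (\<forall>S. n \<in> S \<longrightarrow> short n l' S = short n L S)"
proof -
  have n3: "n \<ge> 3" using nf_n3[OF lv gen] .
  define k where "k = n - 2"
  have nk: "n = Suc (Suc k)" "k \<ge> 1" using n3 unfolding k_def by auto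
  have pos: "\<And>i. i \<in> {1..n} \<Longrightarrow> 0 < L i" and mono: "\<And>i j. 1 \<le> i \<Longrightarrow> i \<le> j \<Longrightarrow> j \<le> n \<Longrightarrow> L i \<le> L j"
    and lst: "L n < sum L {1..n-1}"
    using lv unfolding length_vector_def by auto
  define T where "T = sum L {1..n}"
  define Sg where "Sg = sum L {1..n-2}"
  have TS: "T = Sg + L (n-1) + L n" unfolding T_def Sg_def nk by (simp add: sum.cl_ivl_Suc)
  have S1: "sum L {1..n-1} = Sg + L (n-1)" unfolding Sg_def nk by (simp add: sum.cl_ivl_Suc)
  have SgI: "Sg \<in> \<int>" unfolding Sg_def using int nk by (intro Ints_sum) auto
  have sumI: "A \<subseteq> {1..n} \<Longrightarrow> sum L A \<in> \<int>" for A using int by (intro Ints_sum) auto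
  have sumnn: "A \<subseteq> {1..n} \<Longrightarrow> 0 \<le> sum L A" for A using pos
    by (intro sum_nonneg) (auto simp: less_imp_le subset_iff)
  have memle: "L i \<le> sum L A" if "A \<subseteq> {1..n}" "i \<in> A" for A i
  proof (rule member_le_sum)
    show "finite A" using that(1) finite_subset by blast
  qed (use that pos in \<open>auto simp: less_imp_le subset_iff\<close>)
  have longs: "L (n-1) + L n > Sg" using long unfolding Sg_def by linarith
  define P where "P = {A. A \<subseteq> {1..n-1} \<and> 2*(sum L A + L n) < T}"
  have finP: "finite P" unfolding P_def by (rule finite_subset[of _ "Pow {1..n-1}"]) auto
  have emP: "{} \<in> P" unfolding P_def using lst TS S1 by simp
  define \<mu> where "\<mu> = Max ((\<lambda>A. sum L A) ` P)"
  have P1: "A \<in> P \<Longrightarrow> sum L A \<le> \<mu>" for A unfolding \<mu>_def using finP by (intro Max_ge) auto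
  obtain B where B: "B \<in> P" "sum L B = \<mu>"
  proof -
    have "\<mu> \<in> (\<lambda>A. sum L A) ` P" unfolding \<mu>_def using finP emP by (intro Max_in) auto
    then show ?thesis using that by blast
  qed
  have sub1: "{1..n-1} \<subseteq> {1..n}" "{1..n-2} \<subseteq> {1..n-1}" "{1..n-2} \<subseteq> {1..n}" by auto
  have Psub: "A \<in> P \<Longrightarrow> A \<subseteq> {1..n}" for A unfolding P_def using sub1 by blast
  have P3: "n-1 \<notin> A" if "A \<in> P" for A
  proof
    assume a: "n-1 \<in> A"
    have "L (n-1) \<le> sum L A" using memle[OF Psub[OF that] a] .
    then show False using that longs TS unfolding P_def by auto
  qed
  have Psub2: "A \<subseteq> {1..n-2}" if "A \<in> P" for A
  proof
    fix x assume "x \<in> A" then have "x \<in> {1..n-1}" "x \<noteq> n-1" using that P3 unfolding P_def by auto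
    then show "x \<in> {1..n-2}" by auto
  qed
  have P4: "A \<in> P" if "A \<subseteq> {1..n-2}" "sum L A \<le> \<mu>" for A
  proof -
    have "2*(sum L A + L n) < T" using B that(2) unfolding P_def by auto
    moreover have "A \<subseteq> {1..n-1}" using that(1) sub1 by blast
    ultimately show ?thesis unfolding P_def by blast
  qed
  have muI: "\<mu> \<in> \<int>" using B(2) sumI[OF Psub[OF B(1)]] by simp
  have mu0: "\<mu> \<ge> 0" using P1[OF emP] by simp
  define c where "c = (\<lambda>i. min (L i) (\<mu>+1))"
  define S' where "S' = sum c {1..n-2}"
  define l' where "l' = (\<lambda>i. if i \<le> n-2 then c i else if i = n-1 then \<mu>+1 else S' - \<mu>)"
  have cpos: "i \<in> {1..n} \<Longrightarrow> 0 < c i" for i using pos mu0 unfolding c_def by auto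
  have cI: "c i \<in> \<int>" if "i \<in> {1..n}" for i
  proof -
    have "L i \<in> \<int>" using int that by blast
    then show ?thesis unfolding c_def min_def using muI by simp
  qed
  have S'I: "S' \<in> \<int>" unfolding S'_def using cI nk by (intro Ints_sum) auto
  have sl: "A \<subseteq> {1..n-2} \<Longrightarrow> sum l' A = sum c A" for A
  proof (rule sum.cong)
    fix x assume "A \<subseteq> {1..n-2}" "x \<in> A" then have "x \<le> n-2" by auto
    then show "l' x = c x" unfolding l'_def by simp
  qed simp
  have cnn: "A \<subseteq> {1..n} \<Longrightarrow> 0 \<le> sum c A" for A using cpos
    by (intro sum_nonneg) (auto simp: less_imp_le subset_iff)
  have cmemle: "c i \<le> sum c A" if "A \<subseteq> {1..n}" "i \<in> A" for A i
  proof (rule member_le_sum)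
    show "finite A" using that(1) finite_subset by blast
  qed (use that cpos in \<open>auto simp: less_imp_le subset_iff\<close>)
  have key: "S' \<ge> 2*\<mu> + 1"
  proof -
    have Bs: "B \<subseteq> {1..n-2}" using Psub2[OF B(1)] .
    have cB: "sum c B = \<mu>"
    proof -
      have "sum c B = sum L B"
      proof (rule sum.cong)
        fix x assume "x \<in> B"
        then have "L x \<le> \<mu>" using memle[OF Psub[OF B(1)]] B(2) by auto
        then show "c x = L x" unfolding c_def by simp
      qed simp
      then show ?thesis using B(2) by simp
    qed
    have "sum c {1..n-2} = sum c ({1..n-2} - B) + sum c B"
      by (rule sum.subset_diff[OF Bs]) simp
    then have split: "S' = sum c B + sum c ({1..n-2} - B)" unfolding S'_def by simp
    have Rs: "{1..n-2} - B \<subseteq> {1..n}" using sub1 by blast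
    show ?thesis
    proof (cases "\<exists>i\<in>{1..n-2} - B. L i \<ge> \<mu>+1")
      case True
      then obtain i where i: "i \<in> {1..n-2} - B" "L i \<ge> \<mu>+1" by blast
      have "c i = \<mu>+1" using i(2) unfolding c_def by simp
      then have "sum c ({1..n-2} - B) \<ge> \<mu>+1" using cmemle[OF Rs i(1)] by simp
      then show ?thesis using split cB by simp
    next
      case False
      have "sum c ({1..n-2} - B) = sum L ({1..n-2} - B)"
      proof (rule sum.cong)
        fix x assume "x \<in> {1..n-2} - B"
        then have "L x < \<mu>+1" using False by force
        then show "c x = L x" unfolding c_def by simp
      qed simp
      also have "\<dots> = Sg - \<mu>" unfolding Sg_def using sum_diff[OF _ Bs, of L] B(2) by simp
      finally have e: "sum c ({1..n-2} - B) = Sg - \<mu>" .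
      have "2*(\<mu> + L n) < T" using B unfolding P_def by blast
      then have "2*\<mu> + 2*L n < T" by (simp add: algebra_simps)
      moreover have "L (n-1) \<le> L n" using mono[of "n-1" n] nk by simp
      ultimately have "2*\<mu> < Sg" using TS by linarith
      moreover have "2*\<mu> \<in> \<int>" using muI by simp
      ultimately have "2*\<mu> + 1 \<le> Sg" using int_lt_succ SgI by blast
      then show ?thesis using split cB e by simp
    qed
  qed
  have tot: "sum l' {1..n} = 2*S' + 1"
  proof -
    have "sum l' {1..n} = sum l' {1..n-2} + l' (n-1) + l' n" unfolding nk by (simp add: sum.cl_ivl_Suc)
    also have "sum l' {1..n-2} = S'" using sl[of "{1..n-2}"] unfolding S'_def by simp
    finally show ?thesis unfolding l'_def using nk by simp
  qed
  have l'I: "i \<in> {1..n} \<Longrightarrow> l' i \<in> \<int>" for i unfolding l'_def using cI muI S'I by auto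
  have l'pos: "i \<in> {1..n} \<Longrightarrow> 0 < l' i" for i unfolding l'_def using cpos mu0 key by auto
  have l'sumI: "A \<subseteq> {1..n} \<Longrightarrow> sum l' A \<in> \<int>" for A using l'I by (intro Ints_sum) auto
  have l'nn: "A \<subseteq> {1..n} \<Longrightarrow> 0 \<le> sum l' A" for A using l'pos
    by (intro sum_nonneg) (auto simp: less_imp_le subset_iff)
  have K: "short n l' (insert n A) \<longleftrightarrow> A \<in> P" if A: "A \<subseteq> {1..n-1}" for A
  proof -
    have nA: "n \<notin> A" using A nk by auto
    have finA: "finite A" using A finite_subset by blast
    have sub: "insert n A \<subseteq> {1..n}" using A nk by auto
    have A1: "A \<subseteq> {1..n}" using sub by auto
    have "sum l' (insert n A) = sum l' A + (S' - \<mu>)" using nA finA unfolding l'_def using nk by simp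
    then have "short n l' (insert n A) \<longleftrightarrow> 2 * sum l' A < 2*\<mu> + 1"
      unfolding short_iff tot using sub by auto
    also have "\<dots> \<longleftrightarrow> sum l' A \<le> \<mu>" using int_lt_half l'sumI[OF A1] muI by blast
    also have "\<dots> \<longleftrightarrow> A \<in> P"
    proof (cases "n-1 \<in> A")
      case True
      have "l' (n-1) \<le> sum l' A" using l'pos A1 True
        by (intro member_le_sum) (auto simp: less_imp_le subset_iff finite_subset finA)
      then have "\<not> sum l' A \<le> \<mu>" unfolding l'_def using nk by simp
      then show ?thesis using P3 True by blast
    next
      case False
      have A2: "A \<subseteq> {1..n-2}"
      proof
        fix x assume "x \<in> A" then have "x \<in> {1..n-1}" "x \<noteq> n-1" using A False by auto
        then show "x \<in> {1..n-2}" by auto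
      qed
      have sA: "sum l' A = sum c A" using sl[OF A2] .
      show ?thesis
      proof
        assume le: "sum l' A \<le> \<mu>"
        have "sum c A = sum L A"
        proof (rule sum.cong)
          fix x assume "x \<in> A"
          then have "c x \<le> \<mu>" using cmemle[OF A1] le sA by fastforce
          then show "c x = L x" unfolding c_def by (auto simp: min_def split: if_splits)
        qed simp
        then show "A \<in> P" using P4[OF A2] le sA by simp
      next
        assume AP: "A \<in> P"
        have "sum c A = sum L A"
        proof (rule sum.cong)
          fix x assume "x \<in> A"
          then have "L x \<le> \<mu>" using memle[OF A1] P1[OF AP] by fastforce
          then show "c x = L x" unfolding c_def by simp
        qed simp
        then show "sum l' A \<le> \<mu>" using sA P1[OF AP] by simp
      qed
    qed
    finally show ?thesis .
  qed
  have KL: "short n L (insert n A) \<longleftrightarrow> A \<in> P" if A: "A \<subseteq> {1..n-1}" for A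
  proof -
    have nA: "n \<notin> A" using A nk by auto
    have finA: "finite A" using A finite_subset by blast
    have sub: "insert n A \<subseteq> {1..n}" using A nk by auto
    have "sum L (insert n A) = sum L A + L n" using nA finA by simp
    then show ?thesis unfolding short_iff P_def T_def using sub A by auto
  qed
  have eqsh: "short n l' S = short n L S" if "n \<in> S" for S
  proof (cases "S \<subseteq> {1..n}")
    case True
    define A where "A = S - {n}"
    have SA: "S = insert n A" unfolding A_def using that by auto
    have A: "A \<subseteq> {1..n-1}"
    proof
      fix x assume "x \<in> A" then have "x \<in> {1..n}" "x \<noteq> n" using True unfolding A_def by auto
      then show "x \<in> {1..n-1}" by auto
    qed
    show ?thesis using K[OF A] KL[OF A] SA by simp
  next
    case False
    then show ?thesis unfolding short_def by simp
  qed
  have "length_vector n l'"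
    unfolding length_vector_def
  proof (intro conjI allI impI ballI)
    fix i assume "i \<in> {1..n}" then show "0 < l' i" by (rule l'pos)
  next
    fix i j assume ij: "1 \<le> i" "i \<le> j" "j \<le> n"
    show "l' i \<le> l' j"
    proof (cases "j \<le> n-2")
      case True
      then have "L i \<le> L j" using mono ij by auto
      then show ?thesis using True ij unfolding l'_def c_def by auto
    next
      case False
      then show ?thesis using ij key unfolding l'_def c_def by auto
    qed
  next
    have "sum l' {1..n-1} = sum l' {1..n-2} + l' (n-1)" unfolding nk by (simp add: sum.cl_ivl_Suc)
    also have "l' (n-1) = \<mu>+1" unfolding l'_def using nk by simp
    finally have "sum l' {1..n-1} = S' + (\<mu>+1)" using sl[of "{1..n-2}"] unfolding S'_def by simp
    then show "l' n < sum l' {1..n-1}" unfolding l'_def using nk mu0 by simp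
  qed
  moreover have "generic n l'" unfolding generic_def
  proof (intro allI impI)
    fix S assume S: "S \<subseteq> {1..n}"
    have "sum l' ({1..n} - S) = sum l' {1..n} - sum l' S" using S by (simp add: sum_diff)
    then show "sum l' S \<noteq> sum l' ({1..n} - S)" using int_neq_odd[OF l'sumI[OF S] S'I] tot by auto
  qed
  moreover have "l' n + l' (n-1) \<le> sum l' {1..n-2} + 1"
    using sl[of "{1..n-2}"] unfolding S'_def[symmetric] l'_def using nk by simp
  ultimately have "normal_form n l'" unfolding normal_form_def using l'I by blast
  then show ?thesis using eqsh by blast
qed



theorem proposition3p1:
  shows "(\<forall>n l. length_vector n l \<and> generic n l \<longrightarrow>
            (\<exists>l'. normal_form n l' \<and> equivalent_lv n l l')) \<and>
         (\<forall>n l. normal_form n l \<longrightarrow> gees n l = gees (n+1) (extend_lv n l))"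
proof (intro conjI allI impI)
  fix n l assume a: "length_vector n l \<and> generic n l"
  then obtain L where L: "length_vector n L" "generic n L" "\<forall>i\<in>{1..n}. L i \<in> \<int>"
    "\<forall>S. short n L S = short n l S" using scale by blast
  show "\<exists>l'. normal_form n l' \<and> equivalent_lv n l l'"
  proof (cases "L n + L (n-1) \<le> sum L {1..n-2} + 1")
    case True
    then have "normal_form n L" using L unfolding normal_form_def by blast
    moreover have "equivalent_lv n l L" unfolding equivalent_lv_def
      by (rule genes_cong) (use L(4) in auto)
    ultimately show ?thesis by blast
  next
    case False
    obtain l' where l': "normal_form n l'" "\<forall>S. n \<in> S \<longrightarrow> short n l' S = short n L S"
      using construct[OF L(1,2,3) False] by blast
    have "equivalent_lv n l l'" unfolding equivalent_lv_def
      by (rule genes_cong) (use L(4) l'(2) in auto)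
    then show ?thesis using l'(1) by blast
  qed
next
  fix n l assume "normal_form n l"
  then show "gees n l = gees (n+1) (extend_lv n l)" by (rule part2)
qed


end
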